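(* Let $J\ge2$ be an integer and $\Lambda=[2,2^J]\cap\mathbb Q$. Let $\bm\Theta$ be the set of $\bm\theta=(\sigma^2,Q^2,\phi,\varsigma^2,\omega^2,\gamma^2,\alpha,\beta)$ with $\sigma^2,Q^2,\varsigma^2,\omega^2,\gamma^2,\alpha\in(0,\infty)$, $\phi\in(-1,0)\cup(0,1)$, $\beta\in(0,\pi]$. For $\tau\in\Lambda$ and $\bm\theta\in\bm\Theta$ define $$\nu_\tau(\bm\theta)=\frac{\sigma^2}{\tau}+\frac{6Q^2}{\tau^2}+\frac{\varsigma^2\{(\phi^2-1)\tau+2\phi(\phi^\tau-4\phi^{\tau/2}+3)\}}{(\phi-1)^3(\phi+1)\tau^2}+\frac{\tau^2\omega^2}{16}+\frac{(\tau^2+2)\gamma^2}{12\tau}+\frac{\alpha^2\{1-\cos(\beta\tau/2)\}^2}{\tau^2\{1-\cos\beta\}}.$$ If $\bm\theta_1,\bm\theta_2\in\bm\Theta$ satisfy $\nu_\tau(\bm\theta_1)=\nu_\tau(\bm\theta_2)$ for all $\tau\in\Lambda$, then $\bm\theta_1=\bm\theta_2$.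
   Context: For non-integer $\tau$ the power $\phi^\tau$ is defined as $e^{\tau\ln\phi}$ if $\phi\in(0,1)$ and as $e^{\tau(i\pi+\ln(-\phi))}$ if $\phi\in(-1,0)$ (so $\nu_\tau$ may be complex-valued). The six summands are, respectively, the Haar wavelet variances (extended to a continuous scale $\tau$) of a white noise with variance $\sigma^2$, a quantization noise with parameter $Q^2$, a causal AR(1) process with coefficient $\phi$ and innovation variance $\varsigma^2$, a linear drift with parameter $\omega$, a random walk with innovation variance $\gamma^2$, and a sinusoidal process $\alpha\sin(\beta t+U)$, $U\sim\mathcal U(0,2\pi)$. *)

theory Defs
  imports "HOL-Analysis.Analysis"
begin

definition phipow :: "real \<Rightarrow> real \<Rightarrow> complex" where
  "phipow phi t =
     (if 0 < phi then complex_of_real (exp (t * ln phi))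
      else exp (complex_of_real t * (\<i> * complex_of_real pi + complex_of_real (ln (- phi)))))"

definition Theta :: "(real \<times> real \<times> real \<times> real \<times> real \<times> real \<times> real \<times> real) set" where
  "Theta = {(s2, q2, phi, v2, w2, g2, a, b).
     0 < s2 \<and> 0 < q2 \<and> phi \<in> {-1<..<0} \<union> {0<..<1} \<and> 0 < v2 \<and> 0 < w2 \<and> 0 < g2
     \<and> 0 < a \<and> b \<in> {0<..pi}}"

definition nu :: "real \<Rightarrow> (real \<times> real \<times> real \<times> real \<times> real \<times> real \<times> real \<times> real) \<Rightarrow> complex" where
  "nu tau theta = (case theta of (s2, q2, phi, v2, w2, g2, a, b) \<Rightarrow>
      complex_of_real (s2 / tau + 6 * q2 / tau\<^sup>2)
    + complex_of_real v2 * ((complex_of_real ((phi\<^sup>2 - 1) * tau))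
         + 2 * complex_of_real phi * (phipow phi tau - 4 * phipow phi (tau / 2) + 3))
      / complex_of_real ((phi - 1) ^ 3 * (phi + 1) * tau\<^sup>2)
    + complex_of_real (tau\<^sup>2 * w2 / 16 + (tau\<^sup>2 + 2) * g2 / (12 * tau)
         + a\<^sup>2 * (1 - cos (b * tau / 2))\<^sup>2 / (tau\<^sup>2 * (1 - cos b))))"

definition Lambda :: "nat \<Rightarrow> real set" where
  "Lambda J = {2 .. 2 ^ J} \<inter> \<rat>"

end

theory Submission
  imports Defs "HOL-Complex_Analysis.Complex_Analysis"
begin


definition Lc :: "real \<Rightarrow> complex" where
  "Lc phi = (if 0 < phi then complex_of_real (ln phi) else \<i> * complex_of_real pi + complex_of_real (ln (- phi)))"

lemma phipow_eq: "phipow phi t = exp (complex_of_real t * Lc phi)"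
  unfolding phipow_def Lc_def by (simp flip: exp_of_real of_real_mult)

definition G :: "(real \<times> real \<times> real \<times> real \<times> real \<times> real \<times> real \<times> real) \<Rightarrow> complex \<Rightarrow> complex" where
  "G theta z = (case theta of (s2, q2, phi, v2, w2, g2, a, b) \<Rightarrow>
      of_real s2 / z + 6 * of_real q2 / z^2
    + of_real v2 * (of_real (phi\<^sup>2 - 1) * z + 2 * of_real phi * (exp (z * Lc phi) - 4 * exp (z / 2 * Lc phi) + 3))
      / (of_real ((phi - 1) ^ 3 * (phi + 1)) * z^2)
    + z^2 * of_real w2 / 16 + (z^2 + 2) * of_real g2 / (12 * z)
    + of_real (a\<^sup>2) * (1 - cos (of_real b * z / 2))\<^sup>2 / (z^2 * of_real (1 - cos b)))"

lemma G_nu: "G (s2, q2, phi, v2, w2, g2, a, b) (of_real tau) = nu tau (s2, q2, phi, v2, w2, g2, a, b)"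
proof -
  have c: "cos (complex_of_real b * complex_of_real tau / 2) = of_real (cos (b * tau / 2))"
    by (metis cos_of_real of_real_divide of_real_mult of_real_numeral)
  show ?thesis
  unfolding G_def nu_def phipow_eq
  by (simp add: c mult.commute)
qed

lemma cosb_lt: "0 < b \<Longrightarrow> b \<le> pi \<Longrightarrow> cos b < 1"
  using cos_monotone_0_pi[of 0 b] by simp

lemma G_hol:
  assumes "-1 < phi" "phi < 1" "0 < b" "b \<le> pi"
  shows "G (s2, q2, phi, v2, w2, g2, a, b) holomorphic_on {z. 0 < Re z}"
proof -
  have nz: "z \<noteq> 0" if "z \<in> {z. 0 < Re z}" for z using that by auto
  have p: "(phi - 1) ^ 3 * (phi + 1) \<noteq> 0" using assms by auto
  have c: "1 - cos b \<noteq> 0" using cosb_lt[OF assms(3,4)] by auto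
  show ?thesis unfolding G_def
    using nz p c by (auto intro!: holomorphic_intros)
qed
lemma Theta_G_hol:
  assumes "theta \<in> Theta" shows "G theta holomorphic_on {z. 0 < Re z}"
proof -
  obtain s2 q2 phi v2 w2 g2 a b where t: "theta = (s2, q2, phi, v2, w2, g2, a, b)"
    by (cases theta) auto
  show ?thesis using assms unfolding t Theta_def
    by (intro G_hol) auto
qed

lemma nu_ext:
  assumes "J \<ge> 2" "theta1 \<in> Theta" "theta2 \<in> Theta"
    and eq: "\<forall>tau \<in> Lambda J. nu tau theta1 = nu tau theta2" and "0 < t"
  shows "nu t theta1 = nu t theta2"
proof -
  have Gnu: "G theta (of_real tau) = nu tau theta" for theta tau
    by (cases theta) (auto simp: G_nu)
  let ?S = "{z::complex. 0 < Re z}"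
  let ?U = "complex_of_real ` Lambda J"
  have hol: "(\<lambda>z. G theta1 z - G theta2 z) holomorphic_on ?S"
    using Theta_G_hol assms(2,3) by (intro holomorphic_intros) auto
  have op: "open ?S" by (simp add: open_halfspace_Re_gt)
  have con: "connected ?S" by (simp add: convex_connected convex_halfspace_Re_gt)
  have "(4::real) \<le> 2 ^ J"
  proof -
    have "(2::real) ^ 2 \<le> 2 ^ J" using assms(1) by (intro power_increasing) auto
    then show ?thesis by simp
  qed
  then have U: "?U \<subseteq> ?S" unfolding Lambda_def by auto
  have lim: "3 islimpt ?U"
    unfolding islimpt_approachable
  proof (intro allI impI)
    fix e :: real assume "0 < e"
    then obtain q where q: "q \<in> \<rat>" "3 < q" "q < 3 + min e 1"
      using Rats_dense_in_real[of 3 "3 + min e 1"] by auto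
    have "q \<in> Lambda J" unfolding Lambda_def using q \<open>4 \<le> 2^J\<close> by auto
    moreover have "complex_of_real q \<noteq> 3" using q
      by (metis less_irrefl of_real_eq_iff of_real_numeral)
    moreover have "dist (complex_of_real q) 3 < e"
    proof -
      have "dist (complex_of_real q) 3 = dist q 3"
        by (metis dist_of_real of_real_numeral)
      then show ?thesis using q by (simp add: dist_real_def)
    qed
    ultimately show "\<exists>x'\<in>?U. x' \<noteq> 3 \<and> dist x' 3 < e" by blast
  qed
  have "G theta1 (of_real t) - G theta2 (of_real t) = 0"
    apply (rule analytic_continuation[OF hol op con U _ lim])
    using eq \<open>0 < t\<close> by (auto simp: Gnu)
  then show ?thesis by (simp add: Gnu)
qed


lemma lim0:
  fixes f :: "real \<Rightarrow> real"
  assumes "(f \<longlongrightarrow> L) at_top" "\<forall>t>0. f t = 0"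
  shows "L = 0"
proof -
  have ev: "eventually (\<lambda>t. f t = 0) at_top" using eventually_gt_at_top[of 0]
    by (rule eventually_mono) (use assms(2) in auto)
  show ?thesis by (rule tendsto_unique[OF _ assms(1) tendsto_eventually[OF ev]]) simp
qed

lemma bdd_div:
  fixes H :: "real \<Rightarrow> real"
  assumes "\<forall>t>0. \<bar>H t\<bar> \<le> B" "k > 0"
  shows "((\<lambda>t. H t / t ^ k) \<longlongrightarrow> 0) at_top"
proof (rule Lim_null_comparison)
  show "\<forall>\<^sub>F t in at_top. norm (H t / t ^ k) \<le> B / t ^ k"
    using eventually_gt_at_top[of 0]
  proof eventually_elim
    case (elim t) then show ?case using assms(1)
      by (auto simp: abs_divide intro!: divide_right_mono)
  qed
  have "((\<lambda>t::real. 1 / t ^ k) \<longlongrightarrow> 0) at_top"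
    using assms(2) by (intro tendsto_divide_0[OF tendsto_const]) (auto intro!: filterlim_pow_at_top filterlim_ident filterlim_at_top_imp_at_infinity)
  from tendsto_mult[OF tendsto_const[of B] this] show "((\<lambda>t. B / t ^ k) \<longlongrightarrow> 0) at_top" by simp
qed

lemma inv_pow: "k > 0 \<Longrightarrow> ((\<lambda>t::real. 1 / t ^ k) \<longlongrightarrow> 0) at_top"
  by (intro tendsto_divide_0[OF tendsto_const]) (auto intro!: filterlim_pow_at_top filterlim_ident filterlim_at_top_imp_at_infinity)

lemma coeffs:
  fixes H :: "real \<Rightarrow> real"
  assumes eq: "\<forall>t>0. c4*t^4 + c3*t^3 + c1*t + H t = 0" and bd: "\<forall>t>0. \<bar>H t\<bar> \<le> B"
  shows "c4 = 0 \<and> c3 = 0 \<and> c1 = 0"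
proof -
  have a: "c4 = 0"
  proof (rule lim0)
    have "((\<lambda>t. c4 + c3 * (1/t^1) + c1 * (1/t^3) + H t / t^4) \<longlongrightarrow> c4 + c3 * 0 + c1 * 0 + 0) at_top"
      by (intro tendsto_intros bdd_div[OF bd] inv_pow) auto
    then show "((\<lambda>t. c4 + c3 * (1/t^1) + c1 * (1/t^3) + H t / t^4) \<longlongrightarrow> c4) at_top" by simp
    show "\<forall>t>0. c4 + c3 * (1/t^1) + c1 * (1/t^3) + H t / t^4 = 0"
    proof (intro allI impI)
      fix t :: real assume t: "t > 0"
      have "(c4*t^4 + c3*t^3 + c1*t + H t) / t^4 = 0" using eq t by simp
      then show "c4 + c3 * (1/t^1) + c1 * (1/t^3) + H t / t^4 = 0" using t
        by (simp add: field_simps power_eq_if)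
    qed
  qed
  have b: "c3 = 0"
  proof (rule lim0)
    have "((\<lambda>t. c3 + c1 * (1/t^2) + H t / t^3) \<longlongrightarrow> c3 + c1 * 0 + 0) at_top"
      by (intro tendsto_intros bdd_div[OF bd] inv_pow) auto
    then show "((\<lambda>t. c3 + c1 * (1/t^2) + H t / t^3) \<longlongrightarrow> c3) at_top" by simp
    show "\<forall>t>0. c3 + c1 * (1/t^2) + H t / t^3 = 0"
    proof (intro allI impI)
      fix t :: real assume t: "t > 0"
      have "(c3*t^3 + c1*t + H t) / t^3 = 0" using eq t a by simp
      then show "c3 + c1 * (1/t^2) + H t / t^3 = 0" using t
        by (simp add: field_simps power_eq_if)
    qed
  qed
  have c: "c1 = 0"
  proof (rule lim0)
    have "((\<lambda>t. c1 + H t / t^1) \<longlongrightarrow> c1 + 0) at_top"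
      by (intro tendsto_intros bdd_div[OF bd]) auto
    then show "((\<lambda>t. c1 + H t / t^1) \<longlongrightarrow> c1) at_top" by simp
    show "\<forall>t>0. c1 + H t / t^1 = 0"
    proof (intro allI impI)
      fix t :: real assume t: "t > 0"
      have "(c1*t + H t) / t = 0" using eq t a b by simp
      then show "c1 + H t / t^1 = 0" using t
        by (simp add: field_simps)
    qed
  qed
  show ?thesis using a b c by simp
qed
definition er :: "real \<Rightarrow> real \<Rightarrow> real" where
  "er phi t = Re (phipow phi t - 4 * phipow phi (t / 2))"

lemma exp_Lc: "phi \<noteq> 0 \<Longrightarrow> exp (Lc phi) = of_real phi"
  unfolding Lc_def by (auto simp: exp_add exp_of_real)

lemma phipow_nat: "phi \<noteq> 0 \<Longrightarrow> phipow phi (real m) = of_real (phi ^ m)"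
proof -
  assume "phi \<noteq> 0"
  have "phipow phi (real m) = exp (of_nat m * Lc phi)" unfolding phipow_eq by simp
  also have "\<dots> = exp (Lc phi) ^ m" by (rule exp_of_nat_mult)
  finally show ?thesis using exp_Lc[OF \<open>phi \<noteq> 0\<close>] by simp
qed

lemma er_nat: "phi \<noteq> 0 \<Longrightarrow> er phi (2 * real m) = phi ^ (2 * m) - 4 * phi ^ m"
proof -
  assume h: "phi \<noteq> 0"
  have "real (2 * m) = 2 * real m" by simp
  then show ?thesis unfolding er_def using phipow_nat[OF h, of "2*m"] phipow_nat[OF h, of m]
    by simp
qed

lemma Re_Lc: "phi \<noteq> 0 \<Longrightarrow> Re (Lc phi) = ln \<bar>phi\<bar>"
  unfolding Lc_def by auto

lemma norm_phipow: "phi \<noteq> 0 \<Longrightarrow> norm (phipow phi t) = exp (t * ln \<bar>phi\<bar>)"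
  unfolding phipow_eq norm_exp_eq_Re using Re_Lc by simp

lemma er_bound: "phi \<noteq> 0 \<Longrightarrow> \<bar>er phi t\<bar> \<le> exp (t * ln \<bar>phi\<bar>) + 4 * exp (t / 2 * ln \<bar>phi\<bar>)"
proof -
  assume h: "phi \<noteq> 0"
  have "\<bar>er phi t\<bar> \<le> norm (phipow phi t - 4 * phipow phi (t / 2))"
    unfolding er_def by (rule abs_Re_le_cmod)
  also have "\<dots> \<le> norm (phipow phi t) + norm (4 * phipow phi (t / 2))" by (rule norm_triangle_ineq4)
  also have "\<dots> = exp (t * ln \<bar>phi\<bar>) + 4 * exp (t / 2 * ln \<bar>phi\<bar>)"
    using norm_phipow[OF h] by (simp add: norm_mult)
  finally show ?thesis .
qed

lemma er_bdd: "phi \<noteq> 0 \<Longrightarrow> \<bar>phi\<bar> < 1 \<Longrightarrow> 0 \<le> t \<Longrightarrow> \<bar>er phi t\<bar> \<le> 5"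
proof -
  assume h: "phi \<noteq> 0" "\<bar>phi\<bar> < 1" "0 \<le> t"
  have l: "ln \<bar>phi\<bar> < 0" using h by simp
  have "exp (t * ln \<bar>phi\<bar>) \<le> 1" "exp (t / 2 * ln \<bar>phi\<bar>) \<le> 1"
    using h l by (auto simp: mult_nonneg_nonpos)
  then show ?thesis using er_bound[OF h(1), of t] by linarith
qed

lemma exp_neg_lim: "(c::real) < 0 \<Longrightarrow> ((\<lambda>t. exp (t * c)) \<longlongrightarrow> 0) at_top"
proof -
  assume c: "c < 0"
  have "filterlim (\<lambda>t. c * t) at_bot at_top"
    using c by (intro filterlim_tendsto_neg_mult_at_bot[OF tendsto_const]) (auto intro: filterlim_ident)
  then have "filterlim (\<lambda>t. t * c) at_bot at_top" by (simp add: mult.commute)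
  then show ?thesis by (rule filterlim_compose[OF exp_at_bot])
qed

lemma er_lim: "phi \<noteq> 0 \<Longrightarrow> \<bar>phi\<bar> < 1 \<Longrightarrow> (er phi \<longlongrightarrow> 0) at_top"
proof -
  assume h: "phi \<noteq> 0" "\<bar>phi\<bar> < 1"
  have l: "ln \<bar>phi\<bar> < 0" using h by simp
  have l2: "ln \<bar>phi\<bar> / 2 < 0" using l by simp
  show ?thesis
  proof (rule Lim_null_comparison)
    show "\<forall>\<^sub>F t in at_top. norm (er phi t) \<le> exp (t * ln \<bar>phi\<bar>) + 4 * exp (t * (ln \<bar>phi\<bar> / 2))"
      using er_bound[OF h(1)] by (simp add: mult.commute mult.left_commute)
    have "((\<lambda>t. exp (t * ln \<bar>phi\<bar>) + 4 * exp (t * (ln \<bar>phi\<bar> / 2))) \<longlongrightarrow> 0 + 4 * 0) at_top"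
      by (intro tendsto_intros exp_neg_lim l l2)
    then show "((\<lambda>t. exp (t * ln \<bar>phi\<bar>) + 4 * exp (t * (ln \<bar>phi\<bar> / 2))) \<longlongrightarrow> 0) at_top" by simp
  qed
qed


lemma Re_nu:
  "Re (nu t (s2, q2, phi, v2, w2, g2, a, b)) =
     s2 / t + 6 * q2 / t\<^sup>2
   + v2 * ((phi\<^sup>2 - 1) * t + 2 * phi * (er phi t + 3)) / ((phi - 1) ^ 3 * (phi + 1) * t\<^sup>2)
   + (t\<^sup>2 * w2 / 16 + (t\<^sup>2 + 2) * g2 / (12 * t) + a\<^sup>2 * (1 - cos (b * t / 2))\<^sup>2 / (t\<^sup>2 * (1 - cos b)))"
  unfolding nu_def er_def
  by (simp add: Re_divide_of_real)

lemma gen_alg: "(d::real) \<noteq> 0 \<Longrightarrow> t \<noteq> 0 \<Longrightarrow>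
  t\<^sup>2 * (v * (x + 2 * f * (e + 3)) / (d * t\<^sup>2)) = v * x / d + (2 * f * v / d) * (e + 3)"
  by (simp add: field_simps)

lemma nu_decomp:
  assumes "-1 < phi" "phi < 1" "0 < t" "cos b < 1"
  shows "t\<^sup>2 * Re (nu t (s2, q2, phi, v2, w2, g2, a, b)) =
     (w2/16) * t^4 + (g2/12) * t^3 + (s2 + g2/6 + v2/(phi-1)\<^sup>2) * t
     + ((6 * q2 + 3 * (2 * phi * v2/((phi-1)^3*(phi+1)))) + a\<^sup>2/(1 - cos b) * (1 - cos (b * t / 2))\<^sup>2
        + (2 * phi * v2/((phi-1)^3*(phi+1))) * er phi t)"
proof -
  have h: "phi - 1 \<noteq> 0" "phi + 1 \<noteq> 0" "t \<noteq> 0" "1 - cos b \<noteq> 0" using assms by auto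
  define K where "K = 2 * phi * v2 / ((phi - 1) ^ 3 * (phi + 1))"
  have e1: "t\<^sup>2 * (s2 / t) = s2 * t" using h by (simp add: power2_eq_square)
  have e2: "t\<^sup>2 * (6 * q2 / t\<^sup>2) = 6 * q2" using h by simp
  have e3: "t\<^sup>2 * (v2 * ((phi\<^sup>2 - 1) * t + 2 * phi * (er phi t + 3)) / ((phi - 1) ^ 3 * (phi + 1) * t\<^sup>2))
      = v2 / (phi - 1)\<^sup>2 * t + 3 * K + K * er phi t"
  proof -
    have "t\<^sup>2 * (v2 * ((phi\<^sup>2 - 1) * t + 2 * phi * (er phi t + 3)) / ((phi - 1) ^ 3 * (phi + 1) * t\<^sup>2))
       = v2 * ((phi\<^sup>2 - 1) * t) / ((phi - 1) ^ 3 * (phi + 1)) + K * (er phi t + 3)"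
      unfolding K_def using h by (intro gen_alg) auto
    also have "v2 * ((phi\<^sup>2 - 1) * t) / ((phi - 1) ^ 3 * (phi + 1)) = v2 / (phi - 1)\<^sup>2 * t"
    proof -
      have a1: "phi\<^sup>2 - 1 = (phi - 1) * (phi + 1)" by (simp add: power2_eq_square algebra_simps)
      have a2: "(phi - 1) ^ 3 * (phi + 1) = (phi - 1)\<^sup>2 * ((phi - 1) * (phi + 1))"
        by (simp add: power2_eq_square power3_eq_cube)
      have gen: "m \<noteq> 0 \<Longrightarrow> q \<noteq> 0 \<Longrightarrow> v * (m * t) / (q * m) = v / q * t" for m q v t :: real
        by (simp add: field_simps)
      show ?thesis unfolding a1 a2 using h by (intro gen) auto
    qed
    finally show ?thesis by (simp add: algebra_simps)
  qed
  have e4: "t\<^sup>2 * (t\<^sup>2 * w2 / 16 + (t\<^sup>2 + 2) * g2 / (12 * t) + a\<^sup>2 * (1 - cos (b * t / 2))\<^sup>2 / (t\<^sup>2 * (1 - cos b)))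
     = w2/16 * t^4 + g2/12 * t^3 + g2/6 * t + a\<^sup>2 / (1 - cos b) * (1 - cos (b * t / 2))\<^sup>2"
    using h by (simp add: field_simps power2_eq_square power4_eq_xxxx power3_eq_cube)
  have "t\<^sup>2 * Re (nu t (s2, q2, phi, v2, w2, g2, a, b)) =
     t\<^sup>2 * (s2 / t) + t\<^sup>2 * (6 * q2 / t\<^sup>2)
   + t\<^sup>2 * (v2 * ((phi\<^sup>2 - 1) * t + 2 * phi * (er phi t + 3)) / ((phi - 1) ^ 3 * (phi + 1) * t\<^sup>2))
   + t\<^sup>2 * (t\<^sup>2 * w2 / 16 + (t\<^sup>2 + 2) * g2 / (12 * t) + a\<^sup>2 * (1 - cos (b * t / 2))\<^sup>2 / (t\<^sup>2 * (1 - cos b)))"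
    unfolding Re_nu by (simp only: distrib_left)
  also have "\<dots> = s2 * t + 6 * q2 + (v2 / (phi - 1)\<^sup>2 * t + 3 * K + K * er phi t)
     + (w2/16 * t^4 + g2/12 * t^3 + g2/6 * t + a\<^sup>2 / (1 - cos b) * (1 - cos (b * t / 2))\<^sup>2)"
    by (simp only: e1 e2 e3 e4)
  finally show ?thesis unfolding K_def[symmetric] by (simp add: algebra_simps)
qed


lemma seq_at_top: "0 < c \<Longrightarrow> filterlim (\<lambda>n. c * real (Suc n)) at_top sequentially"
proof -
  assume "0 < c"
  have "filterlim (\<lambda>n. real (Suc n)) at_top sequentially"
    by (rule filterlim_compose[OF filterlim_real_sequentially filterlim_Suc])
  then show ?thesis using \<open>0 < c\<close> by (intro filterlim_tendsto_pos_mult_at_top[OF tendsto_const])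
qed

lemma cos_even: "cos (real (2 * m) * pi) = 1"
  by (simp add: cos_npi)

lemma cos_odd: "cos (real (2 * m + 1) * pi) = -1"
  unfolding cos_npi by simp

lemma half:
  fixes e1 e2 :: "real \<Rightarrow> real"
  assumes eq: "\<forall>t>0. C1 + A1 * (1 - cos (b1 * t / 2))\<^sup>2 + e1 t = C2 + A2 * (1 - cos (b2 * t / 2))\<^sup>2 + e2 t"
    and l1: "(e1 \<longlongrightarrow> 0) at_top" and l2: "(e2 \<longlongrightarrow> 0) at_top"
    and A2: "0 \<le> A2" and b1: "0 < b1"
  shows "C2 \<le> C1 \<and> C1 + 4 * A1 \<le> C2 + 4 * A2"
proof
  define t where "t n = (4 * pi / b1) * real (Suc n)" for n
  have tl: "filterlim t at_top sequentially" unfolding t_def using b1 by (intro seq_at_top) simp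
  have tp: "t n > 0" for n unfolding t_def using b1 by simp
  have c1: "cos (b1 * t n / 2) = 1" for n
  proof -
    have "b1 * t n / 2 = real (2 * Suc n) * pi" unfolding t_def using b1 by (simp add: field_simps)
    then show ?thesis by (simp only: cos_even)
  qed
  have le1: "(\<lambda>n. e1 (t n)) \<longlonglongrightarrow> 0" "(\<lambda>n. e2 (t n)) \<longlonglongrightarrow> 0"
    using filterlim_compose[OF l1 tl] filterlim_compose[OF l2 tl] by auto
  have "(\<lambda>n. C1 + e1 (t n) - e2 (t n)) \<longlonglongrightarrow> C1 + 0 - 0"
    by (intro tendsto_intros le1)
  moreover have "C2 \<le> C1 + e1 (t n) - e2 (t n)" for n
    using eq[rule_format, OF tp[of n]] c1[of n] A2 by simp
  ultimately show "C2 \<le> C1"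
    by (intro tendsto_le[OF trivial_limit_sequentially _ tendsto_const]) auto
  define s where "s n = (2 * pi / b1) * real (Suc (2 * n))" for n
  have sl: "filterlim s at_top sequentially"
  proof -
    have "filterlim (\<lambda>n. (2 * pi / b1) * real (Suc n)) at_top sequentially"
      using b1 by (intro seq_at_top) simp
    moreover have "filterlim (\<lambda>n::nat. 2 * n) sequentially sequentially"
      by (intro filterlim_subseq) (simp add: strict_mono_def)
    ultimately show ?thesis unfolding s_def by (rule filterlim_compose)
  qed
  have sp: "s n > 0" for n unfolding s_def using b1 by simp
  have c2: "cos (b1 * s n / 2) = -1" for n
  proof -
    have "b1 * s n / 2 = real (2 * n + 1) * pi" unfolding s_def using b1 by (simp add: field_simps)
    then show ?thesis by (simp only: cos_odd)
  qed
  have le2: "(\<lambda>n. e1 (s n)) \<longlonglongrightarrow> 0" "(\<lambda>n. e2 (s n)) \<longlonglongrightarrow> 0"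
    using filterlim_compose[OF l1 sl] filterlim_compose[OF l2 sl] by auto
  have "(\<lambda>n. C1 + 4 * A1 + e1 (s n) - e2 (s n)) \<longlonglongrightarrow> C1 + 4 * A1 + 0 - 0"
    by (intro tendsto_intros le2)
  moreover have "C1 + 4 * A1 + e1 (s n) - e2 (s n) \<le> C2 + 4 * A2" for n
  proof -
    have "0 \<le> 1 - cos (b2 * s n / 2)" "1 - cos (b2 * s n / 2) \<le> 2"
      using cos_le_one[of "b2 * s n / 2"] cos_ge_minus_one[of "b2 * s n / 2"] by auto
    then have "(1 - cos (b2 * s n / 2))\<^sup>2 \<le> 2\<^sup>2" by (intro power_mono) auto
    then have "A2 * (1 - cos (b2 * s n / 2))\<^sup>2 \<le> A2 * 4" using A2 by (intro mult_left_mono) auto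
    then show ?thesis using eq[rule_format, OF sp[of n]] c2[of n] by simp
  qed
  ultimately show "C1 + 4 * A1 \<le> C2 + 4 * A2"
    by (intro tendsto_le[OF trivial_limit_sequentially tendsto_const]) auto
qed

lemma cos_seq_one:
  assumes "(\<lambda>n. cos (x * real (Suc n))) \<longlonglongrightarrow> 1"
  shows "cos x = 1"
proof -
  let ?c = "\<lambda>n. cos (x * real (Suc n))" and ?s = "\<lambda>n. sin (x * real (Suc n))"
  have "(\<lambda>n. 1 - (?c n)\<^sup>2) \<longlonglongrightarrow> 1 - 1\<^sup>2" by (intro tendsto_intros assms)
  then have "(\<lambda>n. (?s n)\<^sup>2) \<longlonglongrightarrow> 0" by (simp add: sin_squared_eq)
  then have "(\<lambda>n. sqrt ((?s n)\<^sup>2)) \<longlonglongrightarrow> sqrt 0" by (intro tendsto_intros)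
  then have "(\<lambda>n. \<bar>?s n\<bar>) \<longlonglongrightarrow> 0" by simp
  then have s0: "?s \<longlonglongrightarrow> 0" by (simp add: tendsto_rabs_zero_iff)
  have "(\<lambda>n. ?c n * cos x - ?s n * sin x) \<longlonglongrightarrow> 1 * cos x - 0 * sin x"
    by (intro tendsto_intros assms s0)
  moreover have "?c (Suc n) = ?c n * cos x - ?s n * sin x" for n
  proof -
    have "x * real (Suc (Suc n)) = x * real (Suc n) + x" by (simp add: algebra_simps)
    then show ?thesis by (simp add: cos_add)
  qed
  ultimately have "(\<lambda>n. ?c (Suc n)) \<longlonglongrightarrow> cos x" by simp
  moreover have "(\<lambda>n. ?c (Suc n)) \<longlonglongrightarrow> 1" using assms by (rule LIMSEQ_Suc)
  ultimately show ?thesis using LIMSEQ_unique by blast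
qed

lemma ratio_int:
  fixes e1 e2 :: "real \<Rightarrow> real"
  assumes eq: "\<forall>t>0. A * (1 - cos (b1 * t / 2))\<^sup>2 + e1 t = A * (1 - cos (b2 * t / 2))\<^sup>2 + e2 t"
    and l1: "(e1 \<longlongrightarrow> 0) at_top" and l2: "(e2 \<longlongrightarrow> 0) at_top"
    and A: "0 < A" and b1: "0 < b1"
  shows "b2 / b1 \<in> \<int>"
proof -
  define t where "t n = (4 * pi / b1) * real (Suc n)" for n
  have tl: "filterlim t at_top sequentially" unfolding t_def using b1 by (intro seq_at_top) simp
  have tp: "t n > 0" for n unfolding t_def using b1 by simp
  have c1: "cos (b1 * t n / 2) = 1" for n
  proof -
    have "b1 * t n / 2 = real (2 * Suc n) * pi" unfolding t_def using b1 by (simp add: field_simps)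
    then show ?thesis by (simp only: cos_even)
  qed
  have le1: "(\<lambda>n. e1 (t n)) \<longlonglongrightarrow> 0" "(\<lambda>n. e2 (t n)) \<longlonglongrightarrow> 0"
    using filterlim_compose[OF l1 tl] filterlim_compose[OF l2 tl] by auto
  have "(\<lambda>n. (e1 (t n) - e2 (t n)) / A) \<longlonglongrightarrow> (0 - 0) / A"
    by (intro tendsto_intros le1) (use A in simp)
  moreover have "(e1 (t n) - e2 (t n)) / A = (1 - cos (b2 * t n / 2))\<^sup>2" for n
    using eq[rule_format, OF tp[of n]] c1[of n] A by (simp add: field_simps)
  ultimately have "(\<lambda>n. (1 - cos (b2 * t n / 2))\<^sup>2) \<longlonglongrightarrow> 0" by simp
  then have "(\<lambda>n. sqrt ((1 - cos (b2 * t n / 2))\<^sup>2)) \<longlonglongrightarrow> sqrt 0" by (intro tendsto_intros)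
  moreover have "sqrt ((1 - cos (b2 * t n / 2))\<^sup>2) = 1 - cos (b2 * t n / 2)" for n
    using cos_le_one[of "b2 * t n / 2"] by simp
  ultimately have "(\<lambda>n. 1 - cos (b2 * t n / 2)) \<longlonglongrightarrow> 0" by simp
  then have "(\<lambda>n. 1 - (1 - cos (b2 * t n / 2))) \<longlonglongrightarrow> 1 - 0" by (intro tendsto_intros)
  moreover have "b2 * t n / 2 = (2 * pi * (b2 / b1)) * real (Suc n)" for n
    unfolding t_def using b1 by (simp add: field_simps)
  ultimately have "(\<lambda>n. cos ((2 * pi * (b2 / b1)) * real (Suc n))) \<longlonglongrightarrow> 1" by simp
  then have "cos (2 * pi * (b2 / b1)) = 1" by (rule cos_seq_one)
  then obtain k :: int where "2 * pi * (b2 / b1) = real_of_int k * 2 * pi"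
    unfolding cos_one_2pi_int by blast
  then have "(2 * pi) * (b2 / b1) = (2 * pi) * of_int k" by (simp add: algebra_simps)
  then have "b2 / b1 = of_int k" by (subst (asm) mult_left_cancel) auto
  then show ?thesis by simp
qed

lemma int_recip: "(r::real) > 0 \<Longrightarrow> r \<in> \<int> \<Longrightarrow> 1 / r \<in> \<int> \<Longrightarrow> r = 1"
proof -
  assume r: "r > 0" "r \<in> \<int>" "1 / r \<in> \<int>"
  obtain k where k: "r = of_int k" using r(2) Ints_cases by blast
  obtain m where m: "1 / r = of_int m" using r(3) Ints_cases by blast
  have "k > 0" using k r by simp
  have "of_int (k * m) = (1::real)" using k m r by (simp add: field_simps)
  then have "k * m = 1" by (metis of_int_eq_1_iff)
  then have "k = 1" using \<open>k > 0\<close> by (metis pos_zmult_eq_1_iff zero_less_mult_iff)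
  then show ?thesis using k by simp
qed


lemma phi_ident:
  fixes p1 p2 K1 K2 :: real
  assumes h1: "p1 \<noteq> 0" "\<bar>p1\<bar> < 1" and h2: "p2 \<noteq> 0" "\<bar>p2\<bar> < 1"
    and K: "K1 \<noteq> 0" "K2 \<noteq> 0"
    and eq: "\<And>m. m \<ge> 1 \<Longrightarrow> K1 * (p1 ^ (2 * m) - 4 * p1 ^ m) = K2 * (p2 ^ (2 * m) - 4 * p2 ^ m)"
  shows "p1 = p2 \<and> K1 = K2"
proof -
  have key: "(\<lambda>n. (p ^ (2 * Suc (Suc n)) - 4 * p ^ Suc (Suc n)) / (p ^ (2 * Suc n) - 4 * p ^ Suc n)) \<longlonglongrightarrow> p"
    if hp: "p \<noteq> 0" "\<bar>p\<bar> < 1" for p :: real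
  proof -
    have pw: "(\<lambda>n. p ^ n) \<longlonglongrightarrow> 0" using hp by (intro LIMSEQ_power_zero) simp
    have pw1: "(\<lambda>n. p ^ Suc n) \<longlonglongrightarrow> 0" using LIMSEQ_Suc[OF pw] .
    have pw2: "(\<lambda>n. p ^ Suc (Suc n)) \<longlonglongrightarrow> 0" using LIMSEQ_Suc[OF pw1] .
    have lim: "(\<lambda>n. p * (p ^ Suc (Suc n) - 4) / (p ^ Suc n - 4)) \<longlonglongrightarrow> p * (0 - 4) / (0 - 4)"
      by (intro tendsto_intros pw1 pw2) simp
    have le1: "\<bar>p ^ k\<bar> \<le> 1" for k using hp by (simp add: power_abs power_le_one)
    have eqn: "(p ^ (2 * Suc (Suc n)) - 4 * p ^ Suc (Suc n)) / (p ^ (2 * Suc n) - 4 * p ^ Suc n)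
        = p * (p ^ Suc (Suc n) - 4) / (p ^ Suc n - 4)" for n
    proof -
      define u where "u = p ^ Suc n"
      have u0: "u \<noteq> 0" unfolding u_def using hp by simp
      have u4: "u - 4 \<noteq> 0" using le1[of "Suc n"] unfolding u_def by auto
      have a: "p ^ (2 * Suc n) = u * u" unfolding u_def by (simp add: power_mult power2_eq_square mult_2 power_add)
      have b: "p ^ Suc (Suc n) = p * u" unfolding u_def by simp
      have c: "p ^ (2 * Suc (Suc n)) = (p * u) * (p * u)"
        using b by (metis mult_2 power_add)
      show ?thesis unfolding a b c u_def[symmetric] using u0 u4 by (simp add: field_simps)
    qed
    show ?thesis using lim unfolding eqn by simp
  qed
  have "(\<lambda>n. (p1 ^ (2 * Suc (Suc n)) - 4 * p1 ^ Suc (Suc n)) / (p1 ^ (2 * Suc n) - 4 * p1 ^ Suc n))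
      = (\<lambda>n. (p2 ^ (2 * Suc (Suc n)) - 4 * p2 ^ Suc (Suc n)) / (p2 ^ (2 * Suc n) - 4 * p2 ^ Suc n))"
  proof
    fix n
    have e1: "K1 * (p1 ^ (2 * Suc (Suc n)) - 4 * p1 ^ Suc (Suc n)) = K2 * (p2 ^ (2 * Suc (Suc n)) - 4 * p2 ^ Suc (Suc n))"
      by (rule eq) simp
    have e2: "K1 * (p1 ^ (2 * Suc n) - 4 * p1 ^ Suc n) = K2 * (p2 ^ (2 * Suc n) - 4 * p2 ^ Suc n)"
      by (rule eq) simp
    have "(K1 * (p1 ^ (2 * Suc (Suc n)) - 4 * p1 ^ Suc (Suc n))) / (K1 * (p1 ^ (2 * Suc n) - 4 * p1 ^ Suc n))
        = (K2 * (p2 ^ (2 * Suc (Suc n)) - 4 * p2 ^ Suc (Suc n))) / (K2 * (p2 ^ (2 * Suc n) - 4 * p2 ^ Suc n))"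
      unfolding e1 e2 ..
    then show "(p1 ^ (2 * Suc (Suc n)) - 4 * p1 ^ Suc (Suc n)) / (p1 ^ (2 * Suc n) - 4 * p1 ^ Suc n)
      = (p2 ^ (2 * Suc (Suc n)) - 4 * p2 ^ Suc (Suc n)) / (p2 ^ (2 * Suc n) - 4 * p2 ^ Suc n)"
      by (simp only: mult_divide_mult_cancel_left[OF K(1)] mult_divide_mult_cancel_left[OF K(2)])
  qed
  then have pp: "p1 = p2" using key[OF h1] key[OF h2] by (metis (no_types, lifting) LIMSEQ_unique)
  have "K1 * (p1 ^ 2 - 4 * p1) = K2 * (p1 ^ 2 - 4 * p1)" using eq[of 1] pp by simp
  moreover have "p1 ^ 2 - 4 * p1 \<noteq> 0"
  proof
    assume "p1 ^ 2 - 4 * p1 = 0"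
    then have "p1 * (p1 - 4) = 0" by (simp add: power2_eq_square algebra_simps)
    then show False using h1 by auto
  qed
  ultimately show ?thesis using pp by simp
qed

lemma lemma3_aux:
  fixes J :: nat
  assumes "J \<ge> 2"
    and "theta1 \<in> Theta" and "theta2 \<in> Theta"
    and "\<forall>tau \<in> Lambda J. nu tau theta1 = nu tau theta2"
  shows "theta1 = theta2"
proof -
  have ext: "\<forall>t>0. nu t theta1 = nu t theta2" using nu_ext[OF assms] by blast
  obtain s1 q1 p1 v1 w1 g1 a1 b1 where t1: "theta1 = (s1, q1, p1, v1, w1, g1, a1, b1)"
    by (cases theta1) auto
  obtain s2 q2 p2 v2 w2 g2 a2 b2 where t2: "theta2 = (s2, q2, p2, v2, w2, g2, a2, b2)"
    by (cases theta2) auto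
  have H1: "0 < s1" "0 < q1" "p1 \<noteq> 0" "-1 < p1" "p1 < 1" "0 < v1" "0 < w1" "0 < g1" "0 < a1" "0 < b1" "b1 \<le> pi"
    using assms(2) unfolding t1 Theta_def by auto
  have H2: "0 < s2" "0 < q2" "p2 \<noteq> 0" "-1 < p2" "p2 < 1" "0 < v2" "0 < w2" "0 < g2" "0 < a2" "0 < b2" "b2 \<le> pi"
    using assms(3) unfolding t2 Theta_def by auto
  have cb1: "cos b1 < 1" using cosb_lt H1 by auto
  have cb2: "cos b2 < 1" using cosb_lt H2 by auto
  have ap1: "\<bar>p1\<bar> < 1" and ap2: "\<bar>p2\<bar> < 1" using H1 H2 by auto
  define K1 where "K1 = 2 * p1 * v1 / ((p1 - 1) ^ 3 * (p1 + 1))"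
  define K2 where "K2 = 2 * p2 * v2 / ((p2 - 1) ^ 3 * (p2 + 1))"
  define C1 where "C1 = 6 * q1 + 3 * K1"
  define C2 where "C2 = 6 * q2 + 3 * K2"
  define A1 where "A1 = a1\<^sup>2 / (1 - cos b1)"
  define A2 where "A2 = a2\<^sup>2 / (1 - cos b2)"
  define S1 where "S1 = s1 + g1 / 6 + v1 / (p1 - 1)\<^sup>2"
  define S2 where "S2 = s2 + g2 / 6 + v2 / (p2 - 1)\<^sup>2"
  define P1 where "P1 t = (1 - cos (b1 * t / 2))\<^sup>2" for t
  define P2 where "P2 t = (1 - cos (b2 * t / 2))\<^sup>2" for t
  define e1 where "e1 t = K1 * er p1 t" for t
  define e2 where "e2 t = K2 * er p2 t" for t
  have A1p: "0 < A1" unfolding A1_def using H1 cb1 by simp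
  have A2p: "0 < A2" unfolding A2_def using H2 cb2 by simp
  have d1: "\<And>t. 0 < t \<Longrightarrow> t\<^sup>2 * Re (nu t theta1) = (w1/16) * t^4 + (g1/12) * t^3 + S1 * t + (C1 + A1 * P1 t + e1 t)"
    unfolding t1 using nu_decomp[OF H1(4,5) _ cb1] unfolding K1_def C1_def A1_def S1_def P1_def e1_def by simp
  have d2: "\<And>t. 0 < t \<Longrightarrow> t\<^sup>2 * Re (nu t theta2) = (w2/16) * t^4 + (g2/12) * t^3 + S2 * t + (C2 + A2 * P2 t + e2 t)"
    unfolding t2 using nu_decomp[OF H2(4,5) _ cb2] unfolding K2_def C2_def A2_def S2_def P2_def e2_def by simp
  have Pb1: "0 \<le> P1 t \<and> P1 t \<le> 4" for t
  proof -
    have "0 \<le> 1 - cos (b1 * t / 2)" "1 - cos (b1 * t / 2) \<le> 2"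
      using cos_le_one[of "b1 * t / 2"] cos_ge_minus_one[of "b1 * t / 2"] by auto
    then have "(1 - cos (b1 * t / 2))\<^sup>2 \<le> 2\<^sup>2" by (intro power_mono) auto
    then show ?thesis unfolding P1_def by simp
  qed
  have Pb2: "0 \<le> P2 t \<and> P2 t \<le> 4" for t
  proof -
    have "0 \<le> 1 - cos (b2 * t / 2)" "1 - cos (b2 * t / 2) \<le> 2"
      using cos_le_one[of "b2 * t / 2"] cos_ge_minus_one[of "b2 * t / 2"] by auto
    then have "(1 - cos (b2 * t / 2))\<^sup>2 \<le> 2\<^sup>2" by (intro power_mono) auto
    then show ?thesis unfolding P2_def by simp
  qed
  define H where "H t = (C1 + A1 * P1 t + e1 t) - (C2 + A2 * P2 t + e2 t)" for t
  have Heq: "\<forall>t>0. (w1/16 - w2/16) * t^4 + (g1/12 - g2/12) * t^3 + (S1 - S2) * t + H t = 0"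
  proof (intro allI impI)
    fix t :: real assume t: "0 < t"
    have "t\<^sup>2 * Re (nu t theta1) = t\<^sup>2 * Re (nu t theta2)" using ext t by simp
    then show "(w1/16 - w2/16) * t^4 + (g1/12 - g2/12) * t^3 + (S1 - S2) * t + H t = 0"
      unfolding d1[OF t] d2[OF t] H_def by (simp add: algebra_simps)
  qed
  have Hb: "\<forall>t>0. \<bar>H t\<bar> \<le> \<bar>C1\<bar> + \<bar>C2\<bar> + 4 * A1 + 4 * A2 + 5 * \<bar>K1\<bar> + 5 * \<bar>K2\<bar>"
  proof (intro allI impI)
    fix t :: real assume t: "0 < t"
    have r1: "\<bar>er p1 t\<bar> \<le> 5" using er_bdd[OF H1(3) ap1] t by simp
    have r2: "\<bar>er p2 t\<bar> \<le> 5" using er_bdd[OF H2(3) ap2] t by simp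
    have k1: "\<bar>e1 t\<bar> \<le> 5 * \<bar>K1\<bar>" unfolding e1_def abs_mult
      using r1 mult_left_mono[OF r1, of "\<bar>K1\<bar>"] by (simp add: mult.commute)
    have k2: "\<bar>e2 t\<bar> \<le> 5 * \<bar>K2\<bar>" unfolding e2_def abs_mult
      using r2 mult_left_mono[OF r2, of "\<bar>K2\<bar>"] by (simp add: mult.commute)
    have m1: "0 \<le> A1 * P1 t" "A1 * P1 t \<le> 4 * A1"
      using Pb1[of t] A1p mult_left_mono[of "P1 t" 4 A1] by auto
    have m2: "0 \<le> A2 * P2 t" "A2 * P2 t \<le> 4 * A2"
      using Pb2[of t] A2p mult_left_mono[of "P2 t" 4 A2] by auto
    show "\<bar>H t\<bar> \<le> \<bar>C1\<bar> + \<bar>C2\<bar> + 4 * A1 + 4 * A2 + 5 * \<bar>K1\<bar> + 5 * \<bar>K2\<bar>"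
      unfolding H_def using k1 k2 m1 m2 by linarith
  qed
  from coeffs[OF Heq Hb] have ww: "w1 = w2" and gg: "g1 = g2" and SS: "S1 = S2" by auto
  have Req: "\<forall>t>0. C1 + A1 * P1 t + e1 t = C2 + A2 * P2 t + e2 t"
  proof (intro allI impI)
    fix t :: real assume "0 < t"
    then have "H t = 0" using Heq ww gg SS by auto
    then show "C1 + A1 * P1 t + e1 t = C2 + A2 * P2 t + e2 t" unfolding H_def by simp
  qed
  have el1: "(e1 \<longlongrightarrow> 0) at_top"
  proof -
    have "((\<lambda>t. K1 * er p1 t) \<longlongrightarrow> K1 * 0) at_top" by (intro tendsto_intros er_lim H1(3) ap1)
    then show ?thesis unfolding e1_def by simp
  qed
  have el2: "(e2 \<longlongrightarrow> 0) at_top"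
  proof -
    have "((\<lambda>t. K2 * er p2 t) \<longlongrightarrow> K2 * 0) at_top" by (intro tendsto_intros er_lim H2(3) ap2)
    then show ?thesis unfolding e2_def by simp
  qed
  have hA: "C2 \<le> C1 \<and> C1 + 4 * A1 \<le> C2 + 4 * A2"
    by (rule half[OF Req[unfolded P1_def P2_def] el1 el2]) (use A2p H1 in auto)
  have Req': "\<forall>t>0. C2 + A2 * (1 - cos (b2 * t / 2))\<^sup>2 + e2 t = C1 + A1 * (1 - cos (b1 * t / 2))\<^sup>2 + e1 t"
    using Req by (auto simp: P1_def P2_def)
  have hB: "C1 \<le> C2 \<and> C2 + 4 * A2 \<le> C1 + 4 * A1"
    by (rule half[OF Req' el2 el1]) (use A1p H2 in auto)
  have CC: "C1 = C2" and AA: "A1 = A2" using hA hB by auto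
  have Req2: "\<forall>t>0. A1 * (1 - cos (b1 * t / 2))\<^sup>2 + e1 t = A1 * (1 - cos (b2 * t / 2))\<^sup>2 + e2 t"
    using Req CC AA unfolding P1_def P2_def by auto
  have i1: "b2 / b1 \<in> \<int>" by (rule ratio_int[OF Req2 el1 el2 A1p H1(10)])
  have Req3: "\<forall>t>0. A1 * (1 - cos (b2 * t / 2))\<^sup>2 + e2 t = A1 * (1 - cos (b1 * t / 2))\<^sup>2 + e1 t"
    using Req2 by auto
  have i2: "b1 / b2 \<in> \<int>" by (rule ratio_int[OF Req3 el2 el1 A1p H2(10)])
  have "b2 / b1 = 1" using int_recip[of "b2 / b1"] i1 i2 H1 H2 by simp
  then have bb: "b1 = b2" using H1 by simp
  have "a1\<^sup>2 = a2\<^sup>2" using AA cb1 unfolding A1_def A2_def bb by simp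
  then have aa: "a1 = a2" using H1 H2 by (simp add: power2_eq_iff_nonneg)
  have Keq: "\<forall>t>0. K1 * er p1 t = K2 * er p2 t"
    using Req CC AA bb unfolding e1_def e2_def P1_def P2_def by auto
  have D1: "(p1 - 1) ^ 3 * (p1 + 1) \<noteq> 0" using H1 by auto
  have D2: "(p2 - 1) ^ 3 * (p2 + 1) \<noteq> 0" using H2 by auto
  have K1n: "K1 \<noteq> 0" unfolding K1_def using D1 H1 by simp
  have K2n: "K2 \<noteq> 0" unfolding K2_def using D2 H2 by simp
  have "p1 = p2 \<and> K1 = K2"
  proof (rule phi_ident[OF H1(3) ap1 H2(3) ap2 K1n K2n])
    fix m :: nat assume "1 \<le> m"
    then have "0 < 2 * real m" by simp
    then show "K1 * (p1 ^ (2 * m) - 4 * p1 ^ m) = K2 * (p2 ^ (2 * m) - 4 * p2 ^ m)"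
      using Keq er_nat[OF H1(3), of m] er_nat[OF H2(3), of m] by metis
  qed
  then have pp: "p1 = p2" and KK: "K1 = K2" by auto
  have vv: "v1 = v2"
  proof -
    have "2 * p1 * v1 / ((p1 - 1) ^ 3 * (p1 + 1)) = 2 * p1 * v2 / ((p1 - 1) ^ 3 * (p1 + 1))"
      using KK unfolding K1_def K2_def pp by simp
    then show ?thesis using D1 H1(3) by (simp add: pp)
  qed
  have qq: "q1 = q2" using CC KK unfolding C1_def C2_def by simp
  have ss: "s1 = s2" using SS gg vv pp unfolding S1_def S2_def by simp
  show ?thesis unfolding t1 t2 using ss qq pp vv ww gg aa bb by simp
qed

theorem lemma3:
  fixes J :: nat
  assumes "J \<ge> 2"
    and "theta1 \<in> Theta" and "theta2 \<in> Theta"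
    and "\<forall>tau \<in> Lambda J. nu tau theta1 = nu tau theta2"
  shows "theta1 = theta2"
  using lemma3_aux[OF assms] .

end
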